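(* Let $\mathcal{B}$ be a $\sigma$-algebra on a nonempty set $E$. Every optimal measure on $\mathcal{B}$ is essential, and hence $\sigma$-principal, CCC and autocontinuous.
   Context: An optimal measure is a map $\nu:\mathcal{B}\to[0,\infty]$ with $\nu(\emptyset)=0$, $\nu(B\cup B')=\max(\nu(B),\nu(B'))$, continuous from below ($\nu(\bigcup_nB_n)=\lim_n\nu(B_n)$ for nondecreasing sequences in $\mathcal{B}$) and from above ($\nu(\bigcap_nB_n)=\lim_n\nu(B_n)$ for nonincreasing sequences in $\mathcal{B}$). $\nu$ is essential if there is a $\sigma$-finite $\sigma$-additive measure $m$ on $\mathcal{B}$ with $\nu(B)>0\iff m(B)>0$ for all $B\in\mathcal{B}$. A set $N\subset E$ is $\nu$-negligible if $N\subset G$ for some $G\in\mathcal{B}$ with $\nu(G)=0$. A $\sigma$-ideal of $\mathcal{B}$ is a nonempty $\mathcal{I}\subset\mathcal{B}$ closed under countable unions and under taking subsets belonging to $\mathcal{B}$; $\nu$ is $\sigma$-principal if for each $\sigma$-ideal $\mathcal{I}$ there is $L\in\mathcal{I}$ with $S\setminus L$ $\nu$-negligible for all $S\in\mathcal{I}$. $\nu$ is CCC if every family of pairwise disjoint non-$\nu$-negligible elements of $\mathcal{B}$ is countable. $\nu$ is autocontinuous if there is $f:E\to[0,\infty]$ with $\{f>t\}\in\mathcal{B}$ for all $t\ge0$ and $\nu(B)=\inf\{t>0:B\cap\{f>t\}\text{ is }\nu\text{-negligible}\}$ for all $B\in\mathcal{B}$. *)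

theory Defs
  imports "HOL-Analysis.Analysis"
begin

definition optimal_measure :: "'a set \<Rightarrow> 'a set set \<Rightarrow> ('a set \<Rightarrow> ennreal) \<Rightarrow> bool" where
  "optimal_measure E B \<nu> \<longleftrightarrow>
     \<nu> {} = 0 \<and>
     (\<forall>A\<in>B. \<forall>A'\<in>B. \<nu> (A \<union> A') = max (\<nu> A) (\<nu> A')) \<and>
     (\<forall>Bs::nat \<Rightarrow> 'a set. range Bs \<subseteq> B \<and> incseq Bs \<longrightarrow>
        (\<lambda>n. \<nu> (Bs n)) \<longlonglongrightarrow> \<nu> (\<Union>n. Bs n)) \<and>
     (\<forall>Bs::nat \<Rightarrow> 'a set. range Bs \<subseteq> B \<and> decseq Bs \<longrightarrow>
        (\<lambda>n. \<nu> (Bs n)) \<longlonglongrightarrow> \<nu> (\<Inter>n. Bs n))"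

definition essential :: "'a set \<Rightarrow> 'a set set \<Rightarrow> ('a set \<Rightarrow> ennreal) \<Rightarrow> bool" where
  "essential E B \<nu> \<longleftrightarrow>
     (\<exists>m::'a measure. space m = E \<and> sets m = B \<and> sigma_finite_measure m \<and>
        (\<forall>A\<in>B. \<nu> A > 0 \<longleftrightarrow> emeasure m A > 0))"

definition negligible :: "'a set set \<Rightarrow> ('a set \<Rightarrow> ennreal) \<Rightarrow> 'a set \<Rightarrow> bool" where
  "negligible B \<nu> N \<longleftrightarrow> (\<exists>G\<in>B. N \<subseteq> G \<and> \<nu> G = 0)"

definition sigma_ideal :: "'a set set \<Rightarrow> 'a set set \<Rightarrow> bool" where
  "sigma_ideal B I \<longleftrightarrow> I \<noteq> {} \<and> I \<subseteq> B \<and>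
     (\<forall>F::nat \<Rightarrow> 'a set. range F \<subseteq> I \<longrightarrow> (\<Union>n. F n) \<in> I) \<and>
     (\<forall>S\<in>I. \<forall>T\<in>B. T \<subseteq> S \<longrightarrow> T \<in> I)"

definition sigma_principal :: "'a set set \<Rightarrow> ('a set \<Rightarrow> ennreal) \<Rightarrow> bool" where
  "sigma_principal B \<nu> \<longleftrightarrow>
     (\<forall>I. sigma_ideal B I \<longrightarrow> (\<exists>L\<in>I. \<forall>S\<in>I. negligible B \<nu> (S - L)))"

definition CCC :: "'a set set \<Rightarrow> ('a set \<Rightarrow> ennreal) \<Rightarrow> bool" where
  "CCC B \<nu> \<longleftrightarrow>
     (\<forall>F. F \<subseteq> B \<and> disjoint F \<and> (\<forall>A\<in>F. \<not> negligible B \<nu> A) \<longrightarrow> countable F)"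

definition autocontinuous :: "'a set \<Rightarrow> 'a set set \<Rightarrow> ('a set \<Rightarrow> ennreal) \<Rightarrow> bool" where
  "autocontinuous E B \<nu> \<longleftrightarrow>
     (\<exists>f::'a \<Rightarrow> ennreal. (\<forall>t. {x\<in>E. f x > t} \<in> B) \<and>
        (\<forall>A\<in>B. \<nu> A = Inf {t. t > 0 \<and> negligible B \<nu> (A \<inter> {x\<in>E. f x > t})}))"

end

theory Submission
  imports Defs
begin

locale optm =
  fixes E :: "'a set" and B :: "'a set set" and \<nu> :: "'a set \<Rightarrow> ennreal"
  assumes sa: "sigma_algebra E B" and om: "optimal_measure E B \<nu>"
begin

lemma nu0: "\<nu> {} = 0" using om by (simp add: optimal_measure_def)
lemma maxi: "A \<in> B \<Longrightarrow> A' \<in> B \<Longrightarrow> \<nu> (A \<union> A') = max (\<nu> A) (\<nu> A')"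
  using om by (simp add: optimal_measure_def)
lemma below: "range Bs \<subseteq> B \<Longrightarrow> incseq Bs \<Longrightarrow> (\<lambda>n. \<nu> (Bs n)) \<longlonglongrightarrow> \<nu> (\<Union>n. Bs n)"
  using om by (simp add: optimal_measure_def)
lemma above: "range Bs \<subseteq> B \<Longrightarrow> decseq Bs \<Longrightarrow> (\<lambda>n. \<nu> (Bs n)) \<longlonglongrightarrow> \<nu> (\<Inter>n. Bs n)"
  using om by (simp add: optimal_measure_def)

lemma mono: "A \<in> B \<Longrightarrow> A' \<in> B \<Longrightarrow> A \<subseteq> A' \<Longrightarrow> \<nu> A \<le> \<nu> A'"
  using maxi[of A A'] by (metis max.cobounded1 sup.absorb2)

lemma inE: "A \<in> B \<Longrightarrow> A \<subseteq> E"
proof - interpret sigma_algebra E B by (rule sa) show "A \<in> B \<Longrightarrow> A \<subseteq> E" using sets_into_space by auto qed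
lemma Un_in: "A \<in> B \<Longrightarrow> A' \<in> B \<Longrightarrow> A \<union> A' \<in> B"
proof - interpret sigma_algebra E B by (rule sa) show "A \<in> B \<Longrightarrow> A' \<in> B \<Longrightarrow> A \<union> A' \<in> B" by auto qed
lemma Diff_in: "A \<in> B \<Longrightarrow> A' \<in> B \<Longrightarrow> A - A' \<in> B"
proof - interpret sigma_algebra E B by (rule sa) show "A \<in> B \<Longrightarrow> A' \<in> B \<Longrightarrow> A - A' \<in> B" by auto qed
lemma Int_in: "A \<in> B \<Longrightarrow> A' \<in> B \<Longrightarrow> A \<inter> A' \<in> B"
proof - interpret sigma_algebra E B by (rule sa) show "A \<in> B \<Longrightarrow> A' \<in> B \<Longrightarrow> A \<inter> A' \<in> B" by auto qed
lemma empty_in: "{} \<in> B"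
proof - interpret sigma_algebra E B by (rule sa) show ?thesis by auto qed
lemma E_in: "E \<in> B"
proof - interpret sigma_algebra E B by (rule sa) show ?thesis by auto qed
lemma UN_in: "range (X::nat\<Rightarrow>'a set) \<subseteq> B \<Longrightarrow> (\<Union>n. X n) \<in> B"
proof - interpret sigma_algebra E B by (rule sa) show "range X \<subseteq> B \<Longrightarrow> (\<Union>n. X n) \<in> B" by (rule countable_UN) qed
lemma cUN_in: "countable I \<Longrightarrow> (\<And>i. i \<in> I \<Longrightarrow> X i \<in> B) \<Longrightarrow> (\<Union>i\<in>I. X i) \<in> B"
proof - interpret sigma_algebra E B by (rule sa) show "countable I \<Longrightarrow> (\<And>i. i \<in> I \<Longrightarrow> X i \<in> B) \<Longrightarrow> (\<Union>i\<in>I. X i) \<in> B" by (intro countable_UN') auto qed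

lemma union_le:
  fixes X :: "nat \<Rightarrow> 'a set"
  assumes "range X \<subseteq> B" "\<And>k. \<nu> (X k) \<le> c"
  shows "\<nu> (\<Union>n. X n) \<le> c"
proof -
  define P where "P n = (\<Union>k<n. X k)" for n
  have PB: "P n \<in> B" for n
  proof (induction n)
    case 0 then show ?case by (simp add: P_def empty_in)
  next
    case (Suc n)
    have "P (Suc n) = X n \<union> P n" by (auto simp: P_def lessThan_Suc)
    then show ?case using Suc assms(1) Un_in by auto
  qed
  have Pc: "\<nu> (P n) \<le> c" for n
  proof (induction n)
    case 0 then show ?case by (simp add: P_def nu0)
  next
    case (Suc n)
    have "P (Suc n) = X n \<union> P n" by (auto simp: P_def lessThan_Suc)
    moreover have "X n \<in> B" using assms(1) by auto
    ultimately show ?case using Suc assms(2)[of n] PB[of n] maxi[of "X n" "P n"] by simp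
  qed
  have inc: "incseq P" unfolding P_def by (rule incseq_SucI) (auto simp: lessThan_Suc)
  have U: "(\<Union>n. P n) = (\<Union>n. X n)" by (auto simp: P_def)
  have "(\<lambda>n. \<nu> (P n)) \<longlonglongrightarrow> \<nu> (\<Union>n. P n)" using below[OF _ inc] PB by auto
  then have "\<nu> (\<Union>n. P n) \<le> c" by (rule LIMSEQ_le_const2) (use Pc in auto)
  then show ?thesis using U by simp
qed

lemma disj_seq_false:
  fixes D :: "nat \<Rightarrow> 'a set"
  assumes "range D \<subseteq> B" "disjoint_family D" "\<And>n. \<nu> (D n) > \<epsilon>" "\<epsilon> > 0"
  shows False
proof -
  define T where "T n = (\<Union>k. if k \<ge> n then D k else {})" for n
  have TB: "T n \<in> B" for n unfolding T_def using assms(1) by (intro UN_in) (auto simp: empty_in)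
  have dec: "decseq T" unfolding T_def by (rule decseq_SucI) (auto simp: Suc_le_eq split: if_splits intro: less_imp_le)
  have I: "(\<Inter>n. T n) = {}"
  proof (rule ccontr)
    assume "(\<Inter>n. T n) \<noteq> {}"
    then obtain x where x: "\<And>n. x \<in> T n" by auto
    then obtain k where k: "x \<in> D k" using x[of 0] by (auto simp: T_def split: if_splits)
    from x[of "Suc k"] obtain j where "j \<ge> Suc k" "x \<in> D j" by (auto simp: T_def split: if_splits)
    then have "k \<noteq> j" by simp
    then have "D k \<inter> D j = {}" using assms(2) by (auto simp: disjoint_family_on_def)
    then show False using k \<open>x \<in> D j\<close> by blast
  qed
  have "(\<lambda>n. \<nu> (T n)) \<longlonglongrightarrow> 0" using above[OF _ dec] TB I nu0 by auto
  moreover have "\<nu> (T n) \<ge> \<epsilon>" for n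
  proof -
    have "D n \<subseteq> T n" by (auto simp: T_def)
    moreover have "D n \<in> B" using assms(1) by auto
    ultimately have "\<nu> (D n) \<le> \<nu> (T n)" using mono TB by blast
    then show ?thesis using assms(3)[of n] by simp
  qed
  ultimately have "\<epsilon> \<le> 0" by (intro LIMSEQ_le_const) auto
  then show False using assms(4) by simp
qed

definition atom :: "ennreal \<Rightarrow> 'a set \<Rightarrow> bool" where
  "atom \<epsilon> A \<longleftrightarrow> A \<in> B \<and> \<nu> A > \<epsilon> \<and> (\<forall>Y\<in>B. \<not> (\<nu> (A \<inter> Y) > \<epsilon> \<and> \<nu> (A - Y) > \<epsilon>))"

lemma atom_exists:
  assumes "C \<in> B" "\<nu> C > \<epsilon>" "\<epsilon> > 0"
  shows "\<exists>A. atom \<epsilon> A \<and> A \<subseteq> C"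
proof (rule ccontr)
  assume na: "\<not> ?thesis"
  define sp where "sp X = (SOME Y. Y \<in> B \<and> \<nu> (X \<inter> Y) > \<epsilon> \<and> \<nu> (X - Y) > \<epsilon>)" for X
  define Xs where "Xs n = ((\<lambda>X. X - sp X) ^^ n) C" for n
  have XsS: "Xs (Suc n) = Xs n - sp (Xs n)" for n by (simp add: Xs_def)
  have inv: "Xs n \<in> B \<and> Xs n \<subseteq> C \<and> \<nu> (Xs n) > \<epsilon>" for n
  proof (induction n)
    case 0 then show ?case using assms by (simp add: Xs_def)
  next
    case (Suc n)
    then have "\<not> atom \<epsilon> (Xs n)" using na by auto
    then have "\<exists>Y. Y \<in> B \<and> \<nu> (Xs n \<inter> Y) > \<epsilon> \<and> \<nu> (Xs n - Y) > \<epsilon>" using Suc by (auto simp: atom_def)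
    then have "sp (Xs n) \<in> B \<and> \<nu> (Xs n \<inter> sp (Xs n)) > \<epsilon> \<and> \<nu> (Xs n - sp (Xs n)) > \<epsilon>"
      unfolding sp_def by (rule someI_ex)
    then show ?case using Suc XsS Diff_in by auto
  qed
  have spp: "sp (Xs n) \<in> B \<and> \<nu> (Xs n \<inter> sp (Xs n)) > \<epsilon>" for n
  proof -
    have "\<not> atom \<epsilon> (Xs n)" using na inv by auto
    then have "\<exists>Y. Y \<in> B \<and> \<nu> (Xs n \<inter> Y) > \<epsilon> \<and> \<nu> (Xs n - Y) > \<epsilon>" using inv by (auto simp: atom_def)
    then have "sp (Xs n) \<in> B \<and> \<nu> (Xs n \<inter> sp (Xs n)) > \<epsilon> \<and> \<nu> (Xs n - sp (Xs n)) > \<epsilon>"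
      unfolding sp_def by (rule someI_ex)
    then show ?thesis by auto
  qed
  have dec: "decseq Xs" by (rule decseq_SucI) (auto simp: XsS)
  define D where "D n = Xs n \<inter> sp (Xs n)" for n
  have "disjoint_family D"
  unfolding disjoint_family_on_def
  proof (intro ballI impI)
    fix m n :: nat assume "m \<noteq> n"
    have *: "D i \<inter> D j = {}" if "i < j" for i j
    proof -
      have "Xs j \<subseteq> Xs (Suc i)" using dec that by (simp add: decseq_def)
      then show ?thesis by (auto simp: D_def XsS)
    qed
    show "D m \<inter> D n = {}"
      using \<open>m \<noteq> n\<close> *[of m n] *[of n m] by (cases "m < n") (auto simp: Int_commute)
  qed
  moreover have "range D \<subseteq> B" using spp inv Int_in by (auto simp: D_def)
  ultimately show False using disj_seq_false[of D \<epsilon>] spp assms(3) by (auto simp: D_def)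
qed

lemma atom_eq:
  assumes "atom \<epsilon> A" "atom \<epsilon> A'" "\<nu> (A \<inter> A') > \<epsilon>" "C \<in> B" "\<nu> (A \<inter> C) > \<epsilon>"
  shows "\<nu> (A' \<inter> C) > \<epsilon>"
proof -
  have AB: "A \<in> B" "A' \<in> B" using assms(1,2) unfolding atom_def by auto
  have "A' \<in> B \<longrightarrow> \<not> (\<nu> (A \<inter> A') > \<epsilon> \<and> \<nu> (A - A') > \<epsilon>)" using assms(1) unfolding atom_def by blast
  then have d: "\<nu> (A - A') \<le> \<epsilon>" using AB assms(3) by auto
  have s1: "A \<inter> A' \<inter> C \<in> B" "A - A' \<in> B" using AB assms(4) Int_in Diff_in by auto
  have s2: "A \<inter> C \<in> B" "A' \<inter> C \<in> B" using AB assms(4) Int_in by auto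
  have s3: "(A \<inter> A' \<inter> C) \<union> (A - A') \<in> B" using s1 Un_in by auto
  have "A \<inter> C \<subseteq> (A \<inter> A' \<inter> C) \<union> (A - A')" by auto
  then have "\<nu> (A \<inter> C) \<le> \<nu> ((A \<inter> A' \<inter> C) \<union> (A - A'))"
    using mono[OF s2(1) s3] by simp
  also have "\<dots> = max (\<nu> (A \<inter> A' \<inter> C)) (\<nu> (A - A'))" using maxi[OF s1] .
  finally have m: "\<nu> (A \<inter> C) \<le> max (\<nu> (A \<inter> A' \<inter> C)) (\<nu> (A - A'))" .
  have "\<nu> (A \<inter> A' \<inter> C) > \<epsilon>"
  proof (rule ccontr)
    assume "\<not> ?thesis"
    then have "max (\<nu> (A \<inter> A' \<inter> C)) (\<nu> (A - A')) \<le> \<epsilon>" using d by simp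
    then have "\<nu> (A \<inter> C) \<le> \<epsilon>" using m by (rule order.trans[rotated])
    then show False using assms(5) by simp
  qed
  moreover have "A \<inter> A' \<inter> C \<subseteq> A' \<inter> C" by auto
  then have "\<nu> (A \<inter> A' \<inter> C) \<le> \<nu> (A' \<inter> C)" using mono[OF s1(1) s2(2)] by simp
  ultimately show ?thesis by simp
qed

definition preds :: "ennreal \<Rightarrow> ('a set \<Rightarrow> bool) set" where
  "preds \<epsilon> = {p. \<exists>A. atom \<epsilon> A \<and> p = (\<lambda>C. C \<in> B \<and> \<nu> (A \<inter> C) > \<epsilon>)}"

lemma preds_finite:
  assumes "\<epsilon> > 0" shows "finite (preds \<epsilon>)"
proof (rule ccontr)
  assume "infinite (preds \<epsilon>)"
  then obtain f :: "nat \<Rightarrow> _" where f: "inj f" "range f \<subseteq> preds \<epsilon>"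
    using infinite_countable_subset by blast
  define A where "A i = (SOME A. atom \<epsilon> A \<and> f i = (\<lambda>C. C \<in> B \<and> \<nu> (A \<inter> C) > \<epsilon>))" for i
  have A: "atom \<epsilon> (A i) \<and> f i = (\<lambda>C. C \<in> B \<and> \<nu> (A i \<inter> C) > \<epsilon>)" for i
  proof -
    have "\<exists>A. atom \<epsilon> A \<and> f i = (\<lambda>C. C \<in> B \<and> \<nu> (A \<inter> C) > \<epsilon>)" using f(2) by (auto simp: preds_def)
    then show ?thesis unfolding A_def by (rule someI_ex)
  qed
  have AB: "A i \<in> B" for i using A by (auto simp: atom_def)
  have small: "\<nu> (A i \<inter> A j) \<le> \<epsilon>" if "i \<noteq> j" for i j
  proof (rule ccontr)
    assume "\<not> ?thesis"
    then have big: "\<nu> (A i \<inter> A j) > \<epsilon>" by simp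
    have big': "\<nu> (A j \<inter> A i) > \<epsilon>" using big by (simp add: Int_commute)
    have "f i = f j"
    proof -
      have iff: "\<nu> (A i \<inter> C) > \<epsilon> \<longleftrightarrow> \<nu> (A j \<inter> C) > \<epsilon>" if "C \<in> B" for C
        using atom_eq[OF A[of i, THEN conjunct1] A[of j, THEN conjunct1] big that]
              atom_eq[OF A[of j, THEN conjunct1] A[of i, THEN conjunct1] big' that] by blast
      show ?thesis
      proof (rule ext)
        fix C
        have "f i C = (C \<in> B \<and> \<nu> (A i \<inter> C) > \<epsilon>)" "f j C = (C \<in> B \<and> \<nu> (A j \<inter> C) > \<epsilon>)"
          using A[of i] A[of j] by simp_all
        then show "f i C = f j C" using iff by blast
      qed
    qed
    then show False using f(1) that by (auto dest: injD)
  qed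
  define D where "D i = A i - (\<Union>j. if j = i then {} else A j)" for i
  have "(\<Union>j. if j = i then {} else A j) \<in> B" for i
    by (rule UN_in) (use AB empty_in in auto)
  then have DB: "range D \<subseteq> B" unfolding D_def using AB Diff_in by auto
  have "disjoint_family D" unfolding disjoint_family_on_def
  proof (intro ballI impI)
    fix m n :: nat assume "m \<noteq> n"
    have "D m \<subseteq> A m" "D n \<inter> A m = {}" using \<open>m \<noteq> n\<close> by (auto simp: D_def)
    then show "D m \<inter> D n = {}" by blast
  qed
  moreover have "\<nu> (D i) > \<epsilon>" for i
  proof -
    define X where "X j = A i \<inter> (if j = i then {} else A j)" for j
    have XB: "X j \<in> B" for j
      by (cases "j = i") (simp_all add: X_def empty_in Int_in AB)
    have Xs: "\<nu> (X j) \<le> \<epsilon>" for j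
      by (cases "j = i") (simp_all add: X_def nu0 small)
    have R: "(\<Union>j. X j) \<in> B" using XB by (intro UN_in) auto
    have "\<nu> (\<Union>j. X j) \<le> \<epsilon>" using XB Xs by (intro union_le) auto
    moreover have "A i = D i \<union> (\<Union>j. X j)"
    proof -
      define U where "U = (\<Union>j. if j = i then {} else A j)"
      have "(\<Union>j. X j) = A i \<inter> U" unfolding X_def U_def by blast
      moreover have "D i = A i - U" unfolding D_def U_def ..
      ultimately show ?thesis by blast
    qed
    then have "\<nu> (A i) = max (\<nu> (D i)) (\<nu> (\<Union>j. X j))"
    proof -
      have "D i \<in> B" using DB by blast
      then show ?thesis using maxi[of "D i" "\<Union>j. X j"] R \<open>A i = D i \<union> (\<Union>j. X j)\<close> by simp
    qed
    moreover have "\<nu> (A i) > \<epsilon>" using A by (auto simp: atom_def)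
    ultimately show ?thesis by (auto simp: max_def split: if_splits)
  qed
  ultimately show False using disj_seq_false[OF DB _ _ assms] by blast
qed


lemma preds_B: "p \<in> preds \<epsilon> \<Longrightarrow> p C \<Longrightarrow> C \<in> B"
  by (auto simp: preds_def)

lemma preds_mono: "p \<in> preds \<epsilon> \<Longrightarrow> D \<in> B \<Longrightarrow> C \<subseteq> D \<Longrightarrow> p C \<Longrightarrow> p D"
proof -
  assume "p \<in> preds \<epsilon>" "D \<in> B" "C \<subseteq> D" "p C"
  then obtain A where A: "atom \<epsilon> A" "p = (\<lambda>C. C \<in> B \<and> \<nu> (A \<inter> C) > \<epsilon>)" by (auto simp: preds_def)
  have AB: "A \<in> B" using A by (simp add: atom_def)
  have "C \<in> B" "\<nu> (A \<inter> C) > \<epsilon>" using \<open>p C\<close> A by auto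
  moreover have "\<nu> (A \<inter> C) \<le> \<nu> (A \<inter> D)"
    using mono[OF Int_in[OF AB \<open>C \<in> B\<close>] Int_in[OF AB \<open>D \<in> B\<close>]] \<open>C \<subseteq> D\<close> by blast
  ultimately show "p D" using A \<open>D \<in> B\<close> by auto
qed

lemma preds_disj: "p \<in> preds \<epsilon> \<Longrightarrow> C \<inter> D = {} \<Longrightarrow> p C \<Longrightarrow> p D \<Longrightarrow> False"
proof -
  assume "p \<in> preds \<epsilon>" "C \<inter> D = {}" "p C" "p D"
  then obtain A where A: "atom \<epsilon> A" "p = (\<lambda>C. C \<in> B \<and> \<nu> (A \<inter> C) > \<epsilon>)" by (auto simp: preds_def)
  have AB: "A \<in> B" using A by (simp add: atom_def)
  have CB: "C \<in> B" "\<nu> (A \<inter> C) > \<epsilon>" "D \<in> B" "\<nu> (A \<inter> D) > \<epsilon>" using \<open>p C\<close> \<open>p D\<close> A by auto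
  have "A \<inter> C \<subseteq> A - D" using \<open>C \<inter> D = {}\<close> by auto
  then have "\<nu> (A \<inter> C) \<le> \<nu> (A - D)" using mono[OF Int_in[OF AB CB(1)] Diff_in[OF AB CB(3)]] by blast
  then have "\<nu> (A - D) > \<epsilon>" using CB(2) by simp
  moreover have "D \<in> B \<longrightarrow> \<not> (\<nu> (A \<inter> D) > \<epsilon> \<and> \<nu> (A - D) > \<epsilon>)" using A(1) unfolding atom_def by blast
  ultimately show False using CB by blast
qed

lemma preds_UN:
  fixes Cs :: "nat \<Rightarrow> 'a set"
  assumes "p \<in> preds \<epsilon>" "range Cs \<subseteq> B" "p (\<Union>k. Cs k)" shows "\<exists>k. p (Cs k)"
proof (rule ccontr)
  assume nk: "\<not> ?thesis"
  obtain A where A: "atom \<epsilon> A" "p = (\<lambda>C. C \<in> B \<and> \<nu> (A \<inter> C) > \<epsilon>)" using assms(1) by (auto simp: preds_def)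
  have AB: "A \<in> B" using A by (simp add: atom_def)
  have "\<nu> (A \<inter> Cs k) \<le> \<epsilon>" for k using nk A assms(2) by (auto simp: not_less)
  then have "\<nu> (\<Union>k. A \<inter> Cs k) \<le> \<epsilon>" using assms(2) AB Int_in by (intro union_le) auto
  moreover have "(\<Union>k. A \<inter> Cs k) = A \<inter> (\<Union>k. Cs k)" by blast
  ultimately show False using assms(3) A by auto
qed

lemma preds_empty: "p \<in> preds \<epsilon> \<Longrightarrow> \<not> p {}"
  by (auto simp: preds_def nu0)

lemma preds_pos: "p \<in> preds \<epsilon> \<Longrightarrow> p C \<Longrightarrow> \<nu> C > 0"
proof -
  assume "p \<in> preds \<epsilon>" "p C"
  then obtain A where A: "atom \<epsilon> A" "p = (\<lambda>C. C \<in> B \<and> \<nu> (A \<inter> C) > \<epsilon>)" by (auto simp: preds_def)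
  have AB: "A \<in> B" using A by (simp add: atom_def)
  have CB: "C \<in> B" "\<nu> (A \<inter> C) > \<epsilon>" using \<open>p C\<close> A by auto
  have "\<nu> (A \<inter> C) \<le> \<nu> C" using mono[OF Int_in[OF AB CB(1)] CB(1)] by blast
  moreover have "\<epsilon> \<ge> 0" by simp
  ultimately show ?thesis using CB(2) by (meson le_less_trans less_le_trans)
qed

definition eps :: "nat \<Rightarrow> ennreal" where "eps k = ennreal (inverse (real (Suc k)))"

lemma eps_pos: "eps k > 0" by (simp add: eps_def)

lemma eps_below: assumes "x > 0" shows "\<exists>k. eps k < x"
proof (cases x)
  case (real r)
  then have "r > 0" using assms by auto
  then obtain n where n: "n > 0" "inverse (real n) < r" using ex_inverse_of_nat_less by blast
  then obtain k where "n = Suc k" using gr0_implies_Suc by blast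
  then have "eps k < x" using n real by (simp add: eps_def ennreal_less_iff)
  then show ?thesis by blast
next
  case top
  then show ?thesis by (auto simp: eps_def)
qed

definition Pall :: "('a set \<Rightarrow> bool) set" where
  "Pall = (\<Union>k. preds (eps k)) \<union> {\<lambda>_. False}"

lemma Pall_countable: "countable Pall"
proof -
  have "countable (\<Union>k. preds (eps k))"
    by (rule countable_UN[OF countableI_type]) (rule countable_finite[OF preds_finite[OF eps_pos]])
  then show ?thesis by (simp add: Pall_def)
qed

definition g :: "nat \<Rightarrow> 'a set \<Rightarrow> bool" where "g = from_nat_into Pall"

lemma range_g: "range g = Pall"
  unfolding g_def by (rule range_from_nat_into[OF _ Pall_countable]) (simp add: Pall_def)

lemma gP: "\<exists>\<epsilon>. g n \<in> preds \<epsilon> \<or> g n = (\<lambda>_. False)"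
proof -
  have "g n \<in> Pall" using range_g by auto
  then show ?thesis unfolding Pall_def by auto
qed

lemma g_B: "g n C \<Longrightarrow> C \<in> B"
proof -
  assume h: "g n C"
  obtain \<epsilon> where "g n \<in> preds \<epsilon> \<or> g n = (\<lambda>_. False)" using gP by blast
  then show "C \<in> B" using h preds_B[of "g n" \<epsilon> C] by auto
qed
lemma g_mono: "D \<in> B \<Longrightarrow> C \<subseteq> D \<Longrightarrow> g n C \<Longrightarrow> g n D"
proof -
  assume h: "D \<in> B" "C \<subseteq> D" "g n C"
  obtain \<epsilon> where "g n \<in> preds \<epsilon> \<or> g n = (\<lambda>_. False)" using gP by blast
  then show "g n D" using h preds_mono[of "g n" \<epsilon> D C] by auto
qed
lemma g_disj: "C \<inter> D = {} \<Longrightarrow> g n C \<Longrightarrow> g n D \<Longrightarrow> False"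
proof -
  assume h: "C \<inter> D = {}" "g n C" "g n D"
  obtain \<epsilon> where "g n \<in> preds \<epsilon> \<or> g n = (\<lambda>_. False)" using gP by blast
  then show False using h preds_disj[of "g n" \<epsilon> C D] by auto
qed
lemma g_UN: "range (Cs :: nat \<Rightarrow> 'a set) \<subseteq> B \<Longrightarrow> g n (\<Union>k. Cs k) \<Longrightarrow> \<exists>k. g n (Cs k)"
proof -
  assume h: "range Cs \<subseteq> B" "g n (\<Union>k. Cs k)"
  obtain \<epsilon> where "g n \<in> preds \<epsilon> \<or> g n = (\<lambda>_. False)" using gP by blast
  then show ?thesis using h preds_UN[of "g n" \<epsilon> Cs] by auto
qed
lemma g_empty: "\<not> g n {}"
proof -
  obtain \<epsilon> where "g n \<in> preds \<epsilon> \<or> g n = (\<lambda>_. False)" using gP by blast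
  then show ?thesis using preds_empty[of "g n" \<epsilon>] by auto
qed
lemma g_detect: assumes "C \<in> B" shows "\<nu> C > 0 \<longleftrightarrow> (\<exists>n. g n C)"
proof
  assume "\<nu> C > 0"
  then obtain k where k: "eps k < \<nu> C" using eps_below by blast
  then obtain A where A: "atom (eps k) A" "A \<subseteq> C" using atom_exists[OF assms k eps_pos] by blast
  define p where "p = (\<lambda>C. C \<in> B \<and> \<nu> (A \<inter> C) > eps k)"
  have "p \<in> preds (eps k)" using A unfolding p_def preds_def by auto
  then have "p \<in> Pall" unfolding Pall_def by blast
  then have "p \<in> range g" using range_g by simp
  moreover have "A \<inter> C = A" using A by auto
  then have "p C" using A assms unfolding p_def atom_def by auto
  ultimately show "\<exists>n. g n C" by (metis imageE)
next
  assume "\<exists>n. g n C"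
  then obtain n where "g n C" by blast
  obtain \<epsilon> where "g n \<in> preds \<epsilon> \<or> g n = (\<lambda>_. False)" using gP by blast
  then show "\<nu> C > 0" using \<open>g n C\<close> preds_pos[of "g n" \<epsilon> C] by auto
qed


lemma negl_iff: "C \<in> B \<Longrightarrow> negligible B \<nu> C \<longleftrightarrow> \<nu> C = 0"
proof
  assume "C \<in> B" "negligible B \<nu> C"
  then obtain G where G: "G \<in> B" "C \<subseteq> G" "\<nu> G = 0" by (auto simp: negligible_def)
  then show "\<nu> C = 0" using mono[OF \<open>C \<in> B\<close> G(1) G(2)] by simp
next
  assume "C \<in> B" "\<nu> C = 0"
  then show "negligible B \<nu> C" by (auto simp: negligible_def)
qed

lemma ind_sum:
  fixes Cs :: "nat \<Rightarrow> 'a set"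
  assumes "range Cs \<subseteq> B" "disjoint_family Cs"
  shows "(\<Sum>i. (if g n (Cs i) then 1 else 0 :: ennreal)) = (if g n (\<Union>i. Cs i) then 1 else 0)"
proof (cases "g n (\<Union>i. Cs i)")
  case True
  then obtain k where k: "g n (Cs k)" using g_UN[OF assms(1)] by blast
  have "(\<lambda>i. (if g n (Cs i) then 1 else 0 :: ennreal)) = (\<lambda>i. if i = k then 1 else 0)"
  proof
    fix i show "(if g n (Cs i) then 1 else 0 :: ennreal) = (if i = k then 1 else 0)"
    proof (cases "i = k")
      case False
      then have "Cs i \<inter> Cs k = {}" using assms(2) by (auto simp: disjoint_family_on_def)
      then have "\<not> g n (Cs i)" using g_disj k by blast
      then show ?thesis using False by simp
    qed (simp add: k)
  qed
  moreover have "(\<Sum>i. (if i = k then 1 else 0 :: ennreal)) = 1"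
    using sums_single[of k "\<lambda>_. 1::ennreal"] by (simp add: sums_iff)
  ultimately show ?thesis using True by simp
next
  case False
  have "\<not> g n (Cs i)" for i
  proof
    assume "g n (Cs i)"
    moreover have "(\<Union>i. Cs i) \<in> B" using assms(1) by (rule UN_in)
    ultimately have "g n (\<Union>i. Cs i)" using g_mono by blast
    then show False using False by simp
  qed
  then show ?thesis using False by simp
qed

lemma swap: fixes f :: "nat \<Rightarrow> nat \<Rightarrow> ennreal" shows "(\<Sum>k. \<Sum>n. f n k) = (\<Sum>n. \<Sum>k. f n k)"
proof -
  have "(\<Sum>k. \<Sum>n. f n k) = (\<Sum>k. \<integral>\<^sup>+n. f n k \<partial>count_space UNIV)" by (simp add: nn_integral_count_space_nat)
  also have "\<dots> = (\<integral>\<^sup>+n. (\<Sum>k. f n k) \<partial>count_space UNIV)" by (rule nn_integral_suminf[symmetric]) auto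
  also have "\<dots> = (\<Sum>n. \<Sum>k. f n k)" by (simp add: nn_integral_count_space_nat)
  finally show ?thesis .
qed

definition m0 :: "'a set \<Rightarrow> ennreal" where
  "m0 C = (\<Sum>n. ennreal ((1/2)^n) * (if g n C then 1 else 0))"

lemma m0_pos_iff: "m0 C > 0 \<longleftrightarrow> (\<exists>n. g n C)"
proof -
  have "m0 C = 0 \<longleftrightarrow> (\<forall>n. ennreal ((1/2)^n) * (if g n C then 1 else 0) = 0)"
    unfolding m0_def by (rule suminf_eq_zero_iff[OF summableI]) simp
  also have "\<dots> \<longleftrightarrow> (\<forall>n. \<not> g n C)" by simp
  finally have "m0 C = 0 \<longleftrightarrow> (\<forall>n. \<not> g n C)" .
  moreover have "m0 C > 0 \<longleftrightarrow> m0 C \<noteq> 0" by (rule zero_less_iff_neq_zero)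
  ultimately show ?thesis by blast
qed

lemma m0_ca: "countably_additive B m0"
  unfolding countably_additive_def
proof (intro allI impI)
  fix Cs :: "nat \<Rightarrow> 'a set"
  assume h: "range Cs \<subseteq> B" "disjoint_family Cs" "\<Union> (range Cs) \<in> B"
  have "(\<Sum>i. m0 (Cs i)) = (\<Sum>i. \<Sum>n. ennreal ((1/2)^n) * (if g n (Cs i) then 1 else 0))"
    by (simp add: m0_def)
  also have "\<dots> = (\<Sum>n. \<Sum>i. ennreal ((1/2)^n) * (if g n (Cs i) then 1 else 0))"
    by (rule swap)
  also have "\<dots> = (\<Sum>n. ennreal ((1/2)^n) * (\<Sum>i. (if g n (Cs i) then 1 else 0)))"
    by simp
  also have "\<dots> = (\<Sum>n. ennreal ((1/2)^n) * (if g n (\<Union>i. Cs i) then 1 else 0))"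
    using ind_sum[OF h(1,2)] by simp
  also have "\<dots> = m0 (\<Union>i. Cs i)" by (simp add: m0_def)
  finally show "(\<Sum>i. m0 (Cs i)) = m0 (\<Union> (range Cs))" .
qed

lemma m0_finite: "m0 C \<noteq> top"
proof -
  have "m0 C \<le> (\<Sum>n. ennreal ((1/2)^n))"
    unfolding m0_def by (intro suminf_le) auto
  moreover have "(\<Sum>n. ennreal ((1/2)^n)) \<noteq> top"
    by (rule ennreal_suminf_neq_top) auto
  ultimately show ?thesis by (metis top.extremum_uniqueI)
qed

lemma essential_ok: "essential E B \<nu>"
proof -
  define M where "M = measure_of E B m0"
  have pos: "positive B m0" unfolding positive_def m0_def by (simp add: g_empty)
  have BP: "B \<subseteq> Pow E" using inE by auto
  have sp: "space M = E" unfolding M_def using BP by (rule space_measure_of)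
  have st: "sets M = B" unfolding M_def using BP sa by (simp add: sets_measure_of sigma_algebra.sigma_sets_eq)
  have em: "emeasure M C = m0 C" if "C \<in> B" for C
    unfolding M_def by (rule emeasure_measure_of_sigma[OF sa pos m0_ca that])
  have "finite_measure M" using sp em E_in m0_finite by (intro finite_measureI) auto
  then have sf: "sigma_finite_measure M" by (simp add: finite_measure_def)
  have "\<forall>A\<in>B. \<nu> A > 0 \<longleftrightarrow> emeasure M A > 0"
    using em g_detect m0_pos_iff by auto
  then show ?thesis unfolding essential_def using sp st sf by blast
qed

lemma sigma_principal_ok: "sigma_principal B \<nu>"
  unfolding sigma_principal_def
proof (intro allI impI)
  fix I assume I: "sigma_ideal B I"
  have IB: "I \<subseteq> B" using I by (simp add: sigma_ideal_def)
  have Iun: "\<And>F::nat \<Rightarrow> 'a set. range F \<subseteq> I \<Longrightarrow> (\<Union>n. F n) \<in> I"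
    using I by (simp add: sigma_ideal_def)
  have Isub: "\<And>S T. S \<in> I \<Longrightarrow> T \<in> B \<Longrightarrow> T \<subseteq> S \<Longrightarrow> T \<in> I"
    using I by (simp add: sigma_ideal_def)
  have Ine: "I \<noteq> {}" using I by (simp add: sigma_ideal_def)
  have eI: "{} \<in> I" using Ine Isub empty_in by blast
  define S where "S n = (if \<exists>S\<in>I. g n S then (SOME S. S \<in> I \<and> g n S) else {})" for n
  have SI: "S n \<in> I" for n
  proof (cases "\<exists>S\<in>I. g n S")
    case True
    then have "\<exists>S. S \<in> I \<and> g n S" by blast
    then have "(SOME S. S \<in> I \<and> g n S) \<in> I \<and> g n (SOME S. S \<in> I \<and> g n S)" by (rule someI_ex)
    then show ?thesis using True by (simp add: S_def)
  qed (simp add: S_def eI)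
  have Sg: "g n (S n)" if "\<exists>S\<in>I. g n S" for n
  proof -
    have "\<exists>S. S \<in> I \<and> g n S" using that by blast
    then have "(SOME S. S \<in> I \<and> g n S) \<in> I \<and> g n (SOME S. S \<in> I \<and> g n S)" by (rule someI_ex)
    then show ?thesis using that by (simp add: S_def)
  qed
  define L where "L = (\<Union>n. S n)"
  have LI: "L \<in> I" unfolding L_def using SI by (intro Iun) auto
  have "negligible B \<nu> (T - L)" if T: "T \<in> I" for T
  proof -
    have TB: "T \<in> B" "L \<in> B" using T LI IB by auto
    then have TLB: "T - L \<in> B" by (rule Diff_in)
    have "\<not> \<nu> (T - L) > 0"
    proof
      assume "\<nu> (T - L) > 0"
      then obtain n where n: "g n (T - L)" using g_detect[OF TLB] by blast
      have "T - L \<subseteq> T" by blast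
      then have "g n T" using g_mono[OF TB(1) _ n] by blast
      then have "\<exists>S\<in>I. g n S" using T by blast
      then have "g n (S n)" by (rule Sg)
      moreover have "S n \<subseteq> L" unfolding L_def by blast
      then have "(T - L) \<inter> S n = {}" by blast
      ultimately show False using g_disj[of "T - L" "S n" n] n by blast
    qed
    then have "\<nu> (T - L) = 0" by (simp add: not_less)
    then show ?thesis using negl_iff[OF TLB] by blast
  qed
  then show "\<exists>L\<in>I. \<forall>S\<in>I. negligible B \<nu> (S - L)" using LI by blast
qed

lemma CCC_ok: "CCC B \<nu>"
  unfolding CCC_def
proof (intro allI impI)
  fix F assume h: "F \<subseteq> B \<and> disjoint F \<and> (\<forall>A\<in>F. \<not> negligible B \<nu> A)"
  have ex: "\<exists>n. g n A" if "A \<in> F" for A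
  proof -
    have "A \<in> B" using h that by auto
    moreover have "\<nu> A \<noteq> 0" using h that negl_iff[OF \<open>A \<in> B\<close>] by auto
    ultimately show ?thesis using g_detect by (simp add: zero_less_iff_neq_zero)
  qed
  define idx where "idx A = (LEAST n. g n A)" for A
  have gi: "g (idx A) A" if "A \<in> F" for A unfolding idx_def using ex[OF that] by (rule LeastI_ex)
  have "inj_on idx F"
  proof (rule inj_onI)
    fix A A' assume "A \<in> F" "A' \<in> F" "idx A = idx A'"
    show "A = A'"
    proof (rule ccontr)
      assume "A \<noteq> A'"
      then have "A \<inter> A' = {}" using h \<open>A \<in> F\<close> \<open>A' \<in> F\<close> by (auto simp: disjoint_def)
      moreover have "g (idx A) A'" using gi[OF \<open>A' \<in> F\<close>] \<open>idx A = idx A'\<close> by simp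
      ultimately show False using g_disj gi[OF \<open>A \<in> F\<close>] by blast
    qed
  qed
  then show "countable F" by (rule countableI)
qed


lemma union_le_c:
  assumes "countable J" "\<And>i. i \<in> J \<Longrightarrow> X i \<in> B" "\<And>i. i \<in> J \<Longrightarrow> \<nu> (X i) \<le> c"
  shows "\<nu> (\<Union>i\<in>J. X i) \<le> c"
proof (cases "J = {}")
  case True then show ?thesis by (simp add: nu0)
next
  case False
  define Y where "Y n = X (from_nat_into J n)" for n
  have "from_nat_into J n \<in> J" for n using False by (rule from_nat_into)
  then have Y: "Y n \<in> B" "\<nu> (Y n) \<le> c" for n using assms by (auto simp: Y_def)
  have "(\<Union>n. Y n) = (\<Union>i\<in>J. X i)"
  proof -
    have "(\<Union>n. Y n) = (\<Union>i\<in>range (from_nat_into J). X i)" by (simp add: Y_def)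
    also have "range (from_nat_into J) = J" using False assms(1) by (rule range_from_nat_into)
    finally show ?thesis .
  qed
  moreover have "\<nu> (\<Union>n. Y n) \<le> c" using Y by (intro union_le) auto
  ultimately show ?thesis by simp
qed

definition Iq :: "real \<Rightarrow> 'a set set" where "Iq q = {C \<in> B. \<nu> C \<le> ennreal q}"

lemma Iq_ideal: "sigma_ideal B (Iq q)"
  unfolding sigma_ideal_def
proof (intro conjI allI impI ballI)
  show "Iq q \<noteq> {}" using empty_in nu0 by (auto simp: Iq_def)
  show "Iq q \<subseteq> B" by (auto simp: Iq_def)
next
  fix F :: "nat \<Rightarrow> 'a set" assume "range F \<subseteq> Iq q"
  then have "range F \<subseteq> B" "\<And>k. \<nu> (F k) \<le> ennreal q" by (auto simp: Iq_def)
  then show "(\<Union>n. F n) \<in> Iq q" using UN_in union_le by (auto simp: Iq_def)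
next
  fix S T assume "S \<in> Iq q" "T \<in> B" "T \<subseteq> S"
  then show "T \<in> Iq q" using mono[of T S] by (auto simp: Iq_def)
qed

definition Lq :: "real \<Rightarrow> 'a set" where
  "Lq q = (SOME L. L \<in> Iq q \<and> (\<forall>S\<in>Iq q. negligible B \<nu> (S - L)))"

lemma Lq: "Lq q \<in> Iq q \<and> (\<forall>S\<in>Iq q. negligible B \<nu> (S - Lq q))"
proof -
  have "\<exists>L. L \<in> Iq q \<and> (\<forall>S\<in>Iq q. negligible B \<nu> (S - L))"
    using sigma_principal_ok Iq_ideal unfolding sigma_principal_def by blast
  then show ?thesis unfolding Lq_def by (rule someI_ex)
qed

definition Gq :: "real \<Rightarrow> 'a set" where "Gq q = E - Lq q"

lemma Gq_B: "Gq q \<in> B"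
  using Lq[of q] E_in Diff_in by (auto simp: Gq_def Iq_def)

lemma Gq_key: assumes "C \<in> B" shows "\<nu> (C \<inter> Gq q) = 0 \<longleftrightarrow> \<nu> C \<le> ennreal q"
proof
  assume h: "\<nu> (C \<inter> Gq q) = 0"
  have LB: "Lq q \<in> B" "\<nu> (Lq q) \<le> ennreal q" using Lq[of q] by (auto simp: Iq_def)
  have "C = (C \<inter> Lq q) \<union> (C \<inter> Gq q)" using inE[OF assms] by (auto simp: Gq_def)
  then have "\<nu> C = \<nu> ((C \<inter> Lq q) \<union> (C \<inter> Gq q))" by (rule arg_cong)
  also have "\<dots> = max (\<nu> (C \<inter> Lq q)) (\<nu> (C \<inter> Gq q))"
    by (rule maxi[OF Int_in[OF assms LB(1)] Int_in[OF assms Gq_B]])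
  finally have "\<nu> C = max (\<nu> (C \<inter> Lq q)) (\<nu> (C \<inter> Gq q))" .
  moreover have "\<nu> (C \<inter> Lq q) \<le> \<nu> (Lq q)" using mono[OF Int_in[OF assms LB(1)] LB(1)] by blast
  ultimately show "\<nu> C \<le> ennreal q" using h LB(2) by simp
next
  assume h: "\<nu> C \<le> ennreal q"
  then have "C \<in> Iq q" using assms by (simp add: Iq_def)
  then have "negligible B \<nu> (C - Lq q)" using Lq by blast
  moreover have "C - Lq q = C \<inter> Gq q" using inE[OF assms] by (auto simp: Gq_def)
  ultimately show "\<nu> (C \<inter> Gq q) = 0" using negl_iff Int_in[OF assms Gq_B] by simp
qed

definition ff :: "'a \<Rightarrow> ennreal" where
  "ff x = Sup {ennreal q | q. q \<in> \<rat> \<and> x \<in> Gq q}"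

definition Qt :: "ennreal \<Rightarrow> real set" where "Qt t = {q. q \<in> \<rat> \<and> t < ennreal q}"

lemma Qt_countable: "countable (Qt t)"
  by (rule countable_subset[OF _ countable_rat]) (auto simp: Qt_def)

lemma ff_level: "{x \<in> E. ff x > t} = (\<Union>q\<in>Qt t. Gq q)"
proof -
  have "ff x > t \<longleftrightarrow> (\<exists>q. q \<in> \<rat> \<and> x \<in> Gq q \<and> t < ennreal q)" for x
    unfolding ff_def less_Sup_iff by blast
  moreover have "Gq q \<subseteq> E" for q by (auto simp: Gq_def)
  ultimately show ?thesis by (auto simp: Qt_def)
qed

lemma ff_level_B: "{x \<in> E. ff x > t} \<in> B"
  unfolding ff_level using Qt_countable Gq_B by (intro cUN_in) auto

lemma ff_key: assumes "C \<in> B" shows "\<nu> (C \<inter> {x \<in> E. ff x > t}) = 0 \<longleftrightarrow> \<nu> C \<le> t"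
proof -
  have eq: "C \<inter> {x \<in> E. ff x > t} = (\<Union>q\<in>Qt t. C \<inter> Gq q)" unfolding ff_level by blast
  have "\<nu> (C \<inter> {x \<in> E. ff x > t}) = 0 \<longleftrightarrow> (\<forall>q\<in>Qt t. \<nu> (C \<inter> Gq q) = 0)"
  proof
    assume h: "\<nu> (C \<inter> {x \<in> E. ff x > t}) = 0"
    show "\<forall>q\<in>Qt t. \<nu> (C \<inter> Gq q) = 0"
    proof
      fix q assume "q \<in> Qt t"
      then have "C \<inter> Gq q \<subseteq> C \<inter> {x \<in> E. ff x > t}" unfolding eq by blast
      then have "\<nu> (C \<inter> Gq q) \<le> \<nu> (C \<inter> {x \<in> E. ff x > t})"
        using mono[OF Int_in[OF assms Gq_B] Int_in[OF assms ff_level_B]] by blast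
      then show "\<nu> (C \<inter> Gq q) = 0" using h by simp
    qed
  next
    assume h: "\<forall>q\<in>Qt t. \<nu> (C \<inter> Gq q) = 0"
    have "\<nu> (\<Union>q\<in>Qt t. C \<inter> Gq q) \<le> 0"
      using Qt_countable h Int_in[OF assms Gq_B] by (intro union_le_c) auto
    then show "\<nu> (C \<inter> {x \<in> E. ff x > t}) = 0" unfolding eq by simp
  qed
  also have "\<dots> \<longleftrightarrow> (\<forall>q\<in>Qt t. \<nu> C \<le> ennreal q)" using Gq_key[OF assms] by blast
  also have "\<dots> \<longleftrightarrow> \<nu> C \<le> t"
  proof
    assume h: "\<forall>q\<in>Qt t. \<nu> C \<le> ennreal q"
    show "\<nu> C \<le> t"
    proof (rule ccontr)
      assume "\<not> \<nu> C \<le> t"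
      then have "t < \<nu> C" by simp
      then obtain r :: rat where r: "t < ennreal (real_of_rat r)" "ennreal (real_of_rat r) < \<nu> C"
        using ennreal_rat_dense by blast
      then have "real_of_rat r \<in> Qt t" by (auto simp: Qt_def Rats_def)
      then show False using h r(2) by (meson leD)
    qed
  next
    assume "\<nu> C \<le> t"
    then show "\<forall>q\<in>Qt t. \<nu> C \<le> ennreal q" by (auto simp: Qt_def)
  qed
  finally show ?thesis .
qed

lemma autocontinuous_ok: "autocontinuous E B \<nu>"
  unfolding autocontinuous_def
proof (rule exI[of _ ff], rule conjI)
  show "\<forall>t. {x \<in> E. ff x > t} \<in> B" using ff_level_B by blast
  show "\<forall>C\<in>B. \<nu> C = Inf {t. t > 0 \<and> negligible B \<nu> (C \<inter> {x \<in> E. ff x > t})}"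
  proof
  fix C assume C: "C \<in> B"
  have "{t. t > 0 \<and> negligible B \<nu> (C \<inter> {x \<in> E. ff x > t})} = {t. t > 0 \<and> \<nu> C \<le> t}"
    using ff_key[OF C] negl_iff Int_in[OF C ff_level_B] by auto
  moreover have "Inf {t. t > 0 \<and> \<nu> C \<le> t} = \<nu> C"
  proof (rule antisym)
    show "\<nu> C \<le> Inf {t. t > 0 \<and> \<nu> C \<le> t}" by (rule Inf_greatest) auto
    show "Inf {t. t > 0 \<and> \<nu> C \<le> t} \<le> \<nu> C"
    proof (cases "\<nu> C > 0")
      case True then show ?thesis by (intro Inf_lower) auto
    next
      case False
      then have z: "\<nu> C = 0" by simp
      have "Inf {t. t > 0 \<and> \<nu> C \<le> t} \<le> 0"
      proof (rule dense_ge)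
        fix y :: ennreal assume "0 < y"
        then show "Inf {t. t > 0 \<and> \<nu> C \<le> t} \<le> y" using z by (intro Inf_lower) auto
      qed
      then show ?thesis using z by simp
    qed
  qed
  ultimately show "\<nu> C = Inf {t. t > 0 \<and> negligible B \<nu> (C \<inter> {x \<in> E. ff x > t})}" by simp
  qed
qed

end

theorem proposition6p6:
  fixes E :: "'a set" and B :: "'a set set" and \<nu> :: "'a set \<Rightarrow> ennreal"
  assumes "E \<noteq> {}" and "sigma_algebra E B" and "optimal_measure E B \<nu>"
  shows "essential E B \<nu> \<and> sigma_principal B \<nu> \<and> CCC B \<nu> \<and> autocontinuous E B \<nu>"
proof -
  interpret optm E B \<nu> using assms(2,3) by (rule optm.intro)
  show ?thesis using essential_ok sigma_principal_ok CCC_ok autocontinuous_ok by blast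
qed

end
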